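(* Let $G$ be a connected graph. Then: (i) $\mu_t(G)=n(G)$ if and only if $G$ is a complete graph; (ii) $\mu_t(G)=n(G)-1$ if and only if $G$ is a non-complete graph with domination number $\gamma(G)=1$ (i.e., $G$ is non-complete and has a vertex adjacent to all other vertices).
   Context: All graphs are finite, simple and undirected; $n(G)$ denotes the order of $G$ and $\gamma(G)$ its domination number. Let $G$ be a connected graph and $X\subseteq V(G)$. Two vertices $x,y\in V(G)$ are $X$-visible if there exists a shortest $x,y$-path in $G$ none of whose internal vertices (i.e., vertices other than $x$ and $y$) belongs to $X$. The set $X$ is a total mutual-visibility set of $G$ if every two vertices of $G$ are $X$-visible (the empty set is allowed). The total mutual-visibility number $\mu_t(G)$ is the maximum cardinality of a total mutual-visibility set of $G$. *)

theory Defs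
  imports Main
begin

definition simple_graph :: "'a set \<Rightarrow> ('a \<Rightarrow> 'a \<Rightarrow> bool) \<Rightarrow> bool" where
  "simple_graph V E \<longleftrightarrow> finite V \<and> (\<forall>x y. E x y \<longrightarrow> x \<in> V \<and> y \<in> V)
     \<and> (\<forall>x y. E x y \<longrightarrow> E y x) \<and> (\<forall>x. \<not> E x x)"

definition is_walk :: "('a \<Rightarrow> 'a \<Rightarrow> bool) \<Rightarrow> 'a list \<Rightarrow> bool" where
  "is_walk E p \<longleftrightarrow> p \<noteq> [] \<and> (\<forall>i. Suc i < length p \<longrightarrow> E (p ! i) (p ! Suc i))"

definition walk_between :: "('a \<Rightarrow> 'a \<Rightarrow> bool) \<Rightarrow> 'a \<Rightarrow> 'a \<Rightarrow> 'a list \<Rightarrow> bool" where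
  "walk_between E x y p \<longleftrightarrow> is_walk E p \<and> hd p = x \<and> last p = y"

definition connected_graph :: "'a set \<Rightarrow> ('a \<Rightarrow> 'a \<Rightarrow> bool) \<Rightarrow> bool" where
  "connected_graph V E \<longleftrightarrow> V \<noteq> {} \<and> (\<forall>x\<in>V. \<forall>y\<in>V. \<exists>p. walk_between E x y p)"

definition gdist :: "('a \<Rightarrow> 'a \<Rightarrow> bool) \<Rightarrow> 'a \<Rightarrow> 'a \<Rightarrow> nat" where
  "gdist E x y = (LEAST n. \<exists>p. walk_between E x y p \<and> length p = Suc n)"

definition shortest_path :: "('a \<Rightarrow> 'a \<Rightarrow> bool) \<Rightarrow> 'a \<Rightarrow> 'a \<Rightarrow> 'a list \<Rightarrow> bool" where
  "shortest_path E x y p \<longleftrightarrow> walk_between E x y p \<and> length p = Suc (gdist E x y)"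

definition internal :: "'a list \<Rightarrow> 'a set" where
  "internal p = set (butlast (tl p))"

definition X_visible :: "('a \<Rightarrow> 'a \<Rightarrow> bool) \<Rightarrow> 'a set \<Rightarrow> 'a \<Rightarrow> 'a \<Rightarrow> bool" where
  "X_visible E X x y \<longleftrightarrow> (\<exists>p. shortest_path E x y p \<and> internal p \<inter> X = {})"

definition total_mv_set :: "'a set \<Rightarrow> ('a \<Rightarrow> 'a \<Rightarrow> bool) \<Rightarrow> 'a set \<Rightarrow> bool" where
  "total_mv_set V E X \<longleftrightarrow> X \<subseteq> V \<and> (\<forall>x\<in>V. \<forall>y\<in>V. X_visible E X x y)"

definition mu_t :: "'a set \<Rightarrow> ('a \<Rightarrow> 'a \<Rightarrow> bool) \<Rightarrow> nat" where
  "mu_t V E = Max {card X | X. total_mv_set V E X}"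

definition complete_graph :: "'a set \<Rightarrow> ('a \<Rightarrow> 'a \<Rightarrow> bool) \<Rightarrow> bool" where
  "complete_graph V E \<longleftrightarrow> (\<forall>x\<in>V. \<forall>y\<in>V. x \<noteq> y \<longrightarrow> E x y)"

definition dominating_set :: "'a set \<Rightarrow> ('a \<Rightarrow> 'a \<Rightarrow> bool) \<Rightarrow> 'a set \<Rightarrow> bool" where
  "dominating_set V E D \<longleftrightarrow> D \<subseteq> V \<and> (\<forall>v\<in>V. v \<in> D \<or> (\<exists>u\<in>D. E u v))"

definition domination_number :: "'a set \<Rightarrow> ('a \<Rightarrow> 'a \<Rightarrow> bool) \<Rightarrow> nat" where
  "domination_number V E = Min {card D | D. dominating_set V E D}"

end

theory Submission
  imports Defs
begin

lemma sp_exists: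
  assumes "connected_graph V E" "x \<in> V" "y \<in> V"
  shows "\<exists>p. shortest_path E x y p"
proof -
  obtain p where p: "walk_between E x y p" using assms unfolding connected_graph_def by blast
  then have "p \<noteq> []" unfolding walk_between_def is_walk_def by auto
  then have "\<exists>n p. walk_between E x y p \<and> length p = Suc n" using p
    by (metis Suc_pred length_greater_0_conv)
  from LeastI_ex[OF this] show ?thesis
    unfolding shortest_path_def gdist_def by blast
qed

lemma sp_intro:
  assumes "walk_between E x y p" "length p = Suc n"
    "\<And>q. walk_between E x y q \<Longrightarrow> length q \<ge> Suc n"
  shows "shortest_path E x y p"
proof -
  have "gdist E x y = n" unfolding gdist_def
  proof (rule Least_equality)
    show "\<exists>p. walk_between E x y p \<and> length p = Suc n" using assms by blast
  next
    fix m assume "\<exists>p. walk_between E x y p \<and> length p = Suc m"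
    then show "n \<le> m" using assms(3) by force
  qed
  then show ?thesis using assms unfolding shortest_path_def by simp
qed

lemma walk_len1:
  assumes "walk_between E x y q"
  shows "length q \<ge> 1"
  using assms unfolding walk_between_def is_walk_def
  by (simp add: Suc_leI)

lemma walk_len2:
  assumes "walk_between E x y q" "x \<noteq> y"
  shows "length q \<ge> 2"
proof (rule ccontr)
  assume "\<not> ?thesis"
  with walk_len1[OF assms(1)] have "length q = 1" by simp
  then obtain a where "q = [a]" by (metis One_nat_def length_0_conv length_Suc_conv)
  then show False using assms unfolding walk_between_def by auto
qed

lemma walk_len3:
  assumes "walk_between E x y q" "x \<noteq> y" "\<not> E x y"
  shows "length q \<ge> 3"
proof (rule ccontr)
  assume "\<not> ?thesis"
  with walk_len2[OF assms(1,2)] have "length q = 2" by simp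
  then obtain a b where q: "q = [a,b]"
    by (metis One_nat_def Suc_1 length_0_conv length_Suc_conv)
  then have "E a b" using assms(1) unfolding walk_between_def is_walk_def
    by (metis One_nat_def length_Cons list.size(3) nth_Cons_0 nth_Cons_Suc lessI Suc_1)
  then show False using assms q unfolding walk_between_def by simp
qed

lemma far:
  assumes "simple_graph V E" "walk_between E x y p" "x \<noteq> y" "\<not> E x y"
  shows "p ! 1 \<in> internal p \<and> p ! 1 \<in> V \<and> E x (p ! 1)"
proof -
  have l: "length p \<ge> 3" using walk_len3[OF assms(2-4)] .
  have w: "is_walk E p" "hd p = x" using assms(2) unfolding walk_between_def by auto
  have e: "E (p ! 0) (p ! 1)" using w(1) l unfolding is_walk_def by force
  have "p ! 0 = x" using w(2) l by (metis hd_conv_nth list.size(3) not_numeral_le_zero)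
  with e have e2: "E x (p ! 1)" by simp
  have "p ! 1 \<in> V" using e2 assms(1) unfolding simple_graph_def by blast
  moreover have "butlast (tl p) ! 0 = p ! 1" using l
    by (simp add: nth_butlast nth_tl)
  moreover have "0 < length (butlast (tl p))" using l by simp
  ultimately show ?thesis using e2 unfolding internal_def by (metis nth_mem)
qed

lemma vis_easy:
  assumes "x = y \<or> E x y"
  shows "X_visible E X x y"
proof (cases "x = y")
  case True
  have "shortest_path E x y [x]"
    by (rule sp_intro[where n=0]) (auto simp: True walk_between_def is_walk_def Suc_le_eq)
  then show ?thesis unfolding X_visible_def internal_def by force
next
  case False
  with assms have "E x y" by simp
  have "shortest_path E x y [x,y]"
  proof (rule sp_intro[where n=1])
    show "walk_between E x y [x, y]"
      by (auto simp: \<open>E x y\<close> walk_between_def is_walk_def less_Suc_eq)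
  next
    fix q assume "walk_between E x y q"
    from walk_len2[OF this False] show "Suc 1 \<le> length q" by simp
  qed simp
  then show ?thesis unfolding X_visible_def internal_def by force
qed

lemma mu_facts:
  assumes "simple_graph V E" "connected_graph V E"
  shows "\<exists>X. total_mv_set V E X \<and> card X = mu_t V E"
    and "\<And>X. total_mv_set V E X \<Longrightarrow> card X \<le> mu_t V E"
    and "mu_t V E \<le> card V"
proof -
  let ?S = "{card X | X. total_mv_set V E X}"
  have fin: "finite V" using assms(1) unfolding simple_graph_def by simp
  have "?S \<subseteq> card ` Pow V" unfolding total_mv_set_def by auto
  then have fS: "finite ?S" using fin by (meson finite_Pow_iff finite_imageI finite_subset)
  have "total_mv_set V E {}" unfolding total_mv_set_def X_visible_def
    using sp_exists[OF assms(2)] by simp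
  then have ne: "?S \<noteq> {}" by blast
  show "\<exists>X. total_mv_set V E X \<and> card X = mu_t V E"
    using Max_in[OF fS ne] unfolding mu_t_def by force
  show "\<And>X. total_mv_set V E X \<Longrightarrow> card X \<le> mu_t V E"
    unfolding mu_t_def using fS by (auto intro: Max_ge)
  have "\<forall>k\<in>?S. k \<le> card V" using fin unfolding total_mv_set_def by (auto intro: card_mono)
  then show "mu_t V E \<le> card V" unfolding mu_t_def using Max_in[OF fS ne] by blast
qed

lemma dom_one:
  assumes "finite V" "V \<noteq> {}"
  shows "domination_number V E = 1 \<longleftrightarrow> (\<exists>v\<in>V. \<forall>w\<in>V. w \<noteq> v \<longrightarrow> E v w)"
proof -
  let ?S = "{card D | D. dominating_set V E D}"
  have "?S \<subseteq> card ` Pow V" unfolding dominating_set_def by auto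
  then have fS: "finite ?S" using assms by (meson finite_Pow_iff finite_imageI finite_subset)
  have "dominating_set V E V" unfolding dominating_set_def by auto
  then have ne: "?S \<noteq> {}" by blast
  have pos: "\<forall>k\<in>?S. k \<ge> 1"
  proof
    fix k assume "k \<in> ?S"
    then obtain D where D: "dominating_set V E D" "k = card D" by blast
    have "finite D" using D assms unfolding dominating_set_def by (meson finite_subset)
    moreover have "D \<noteq> {}" using D(1) assms(2) unfolding dominating_set_def by blast
    ultimately show "k \<ge> 1" using D by (simp add: Suc_leI card_gt_0_iff)
  qed
  have "domination_number V E = 1 \<longleftrightarrow> 1 \<in> ?S"
  proof
    assume "domination_number V E = 1"
    then show "1 \<in> ?S" using Min_in[OF fS ne] unfolding domination_number_def by simp
  next
    assume "1 \<in> ?S"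
    then have "Min ?S \<le> 1" using fS by (intro Min_le)
    moreover have "Min ?S \<ge> 1" using pos Min_in[OF fS ne] by blast
    ultimately show "domination_number V E = 1" unfolding domination_number_def by simp
  qed
  also have "\<dots> \<longleftrightarrow> (\<exists>v\<in>V. \<forall>w\<in>V. w \<noteq> v \<longrightarrow> E v w)"
  proof
    assume "1 \<in> ?S"
    then obtain D where "dominating_set V E D" "card D = 1" by auto
    then obtain v where "D = {v}" "dominating_set V E {v}" by (metis card_1_singletonE)
    then show "\<exists>v\<in>V. \<forall>w\<in>V. w \<noteq> v \<longrightarrow> E v w" unfolding dominating_set_def by auto
  next
    assume "\<exists>v\<in>V. \<forall>w\<in>V. w \<noteq> v \<longrightarrow> E v w"
    then obtain v where "v \<in> V" "\<forall>w\<in>V. w \<noteq> v \<longrightarrow> E v w" by blast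
    then have "dominating_set V E {v}" unfolding dominating_set_def by auto
    then show "1 \<in> ?S" by force
  qed
  finally show ?thesis .
qed

theorem corollary2p3:
  fixes V :: "'a set" and E :: "'a \<Rightarrow> 'a \<Rightarrow> bool"
  assumes "simple_graph V E" and "connected_graph V E"
  shows "(mu_t V E = card V \<longleftrightarrow> complete_graph V E)
       \<and> (mu_t V E = card V - 1 \<longleftrightarrow> \<not> complete_graph V E \<and> domination_number V E = 1)"
proof -
  have fin: "finite V" using assms(1) unfolding simple_graph_def by simp
  have ne: "V \<noteq> {}" using assms(2) unfolding connected_graph_def by simp
  have cpos: "card V \<ge> 1" using fin ne by (simp add: Suc_leI card_gt_0_iff)
  note M = mu_facts[OF assms]
  have sym: "\<And>x y. E x y \<Longrightarrow> E y x" using assms(1) unfolding simple_graph_def by blast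
  have irr: "\<And>x. \<not> E x x" using assms(1) unfolding simple_graph_def by blast
  have I: "mu_t V E = card V \<longleftrightarrow> complete_graph V E"
  proof
    assume h: "mu_t V E = card V"
    obtain X where X: "total_mv_set V E X" "card X = card V" using M(1) h by auto
    then have XV: "X = V" using fin unfolding total_mv_set_def by (metis card_subset_eq)
    show "complete_graph V E" unfolding complete_graph_def
    proof (intro ballI impI, rule ccontr)
      fix x y assume xy: "x \<in> V" "y \<in> V" "x \<noteq> y" "\<not> E x y"
      then obtain p where p: "shortest_path E x y p" "internal p \<inter> X = {}"
        using X(1) unfolding total_mv_set_def X_visible_def by blast
      have "walk_between E x y p" using p(1) unfolding shortest_path_def by simp
      from far[OF assms(1) this xy(3,4)] p(2) XV show False by blast
    qed
  next
    assume c: "complete_graph V E"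
    have "total_mv_set V E V" unfolding total_mv_set_def
      using c unfolding complete_graph_def by (auto intro: vis_easy)
    then show "mu_t V E = card V" using M(2)[of V] M(3) by simp
  qed
  have II: "mu_t V E = card V - 1 \<longleftrightarrow> \<not> complete_graph V E \<and> (\<exists>v\<in>V. \<forall>w\<in>V. w \<noteq> v \<longrightarrow> E v w)"
  proof
    assume h: "mu_t V E = card V - 1"
    then have nc: "\<not> complete_graph V E" using I cpos by (cases "complete_graph V E") auto
    obtain X where X: "total_mv_set V E X" "card X = card V - 1" using M(1) h by auto
    have XV: "X \<subseteq> V" using X(1) unfolding total_mv_set_def by simp
    have "card (V - X) = 1" using X(2) XV fin cpos by (simp add: card_Diff_subset finite_subset)
    then obtain v where v: "V - X = {v}" by (metis card_1_singletonE)
    have "\<forall>w\<in>V. w \<noteq> v \<longrightarrow> E v w"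
    proof (intro ballI impI, rule ccontr)
      fix w assume w: "w \<in> V" "w \<noteq> v" "\<not> E v w"
      have vV: "v \<in> V" using v by blast
      obtain p where p: "shortest_path E v w p" "internal p \<inter> X = {}"
        using X(1) w vV unfolding total_mv_set_def X_visible_def by blast
      have "walk_between E v w p" using p(1) unfolding shortest_path_def by simp
      from far[OF assms(1) this w(2)[symmetric] w(3)]
      have "p ! 1 \<in> internal p" "p ! 1 \<in> V" "E v (p ! 1)" by auto
      moreover have "p ! 1 \<noteq> v" using \<open>E v (p ! 1)\<close> irr by auto
      ultimately show False using p(2) v by blast
    qed
    with nc v show "\<not> complete_graph V E \<and> (\<exists>v\<in>V. \<forall>w\<in>V. w \<noteq> v \<longrightarrow> E v w)" by blast
  next
    assume "\<not> complete_graph V E \<and> (\<exists>v\<in>V. \<forall>w\<in>V. w \<noteq> v \<longrightarrow> E v w)"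
    then obtain v where nc: "\<not> complete_graph V E" and v: "v \<in> V" "\<forall>w\<in>V. w \<noteq> v \<longrightarrow> E v w"
      by blast
    have "total_mv_set V E (V - {v})" unfolding total_mv_set_def
    proof (intro conjI ballI)
      fix x y assume xy: "x \<in> V" "y \<in> V"
      show "X_visible E (V - {v}) x y"
      proof (cases "x = y \<or> E x y")
        case True then show ?thesis by (rule vis_easy)
      next
        case False
        then have nxy: "x \<noteq> y" "\<not> E x y" by auto
        have xv: "x \<noteq> v" using v nxy xy by auto
        have yv: "y \<noteq> v" using v nxy xy sym by blast
        have exv: "E x v" using v xy xv sym by blast
        have evy: "E v y" using v xy yv by blast
        have "shortest_path E x y [x,v,y]"
        proof (rule sp_intro[where n=2])
          show "walk_between E x y [x, v, y]"
            unfolding walk_between_def is_walk_def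
            using exv evy by (auto simp: less_Suc_eq nth_Cons split: nat.splits)
        next
          fix q assume "walk_between E x y q"
          from walk_len3[OF this nxy] show "Suc 2 \<le> length q" by simp
        qed simp
        moreover have "internal [x,v,y] \<inter> (V - {v}) = {}" unfolding internal_def by simp
        ultimately show ?thesis unfolding X_visible_def by blast
      qed
    qed simp
    then have "card V - 1 \<le> mu_t V E" using M(2)[of "V - {v}"] fin v by (simp add: card_Diff_singleton)
    moreover have "mu_t V E \<noteq> card V" using I nc by simp
    ultimately show "mu_t V E = card V - 1" using M(3) by linarith
  qed
  show ?thesis using I II dom_one[OF fin ne, of E] by simp
qed

end
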